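(* Let $Q:\mathbb C\to\mathbb R$ be $[0,1]$-admissible. Then, pointwise on $\mathbb C$, $\lim_{\tau\to0^+}\check Q_\tau=\min Q$.
   Context: For $\tau\ge0$, $\check Q_\tau$ is the maximal subharmonic function $q\le Q$ on $\mathbb C$ with $q(z)\le\tau\log|z|^2+\mathcal O(1)$ as $|z|\to\infty$; $S^\star_{Q,\tau}=\{\check Q_\tau=Q\}$. For $\tau>0$, $S_{Q,\tau}$ is the support of the unique minimizer of $J(\mu)=\iint\log\frac1{|z-w|}d\mu(z)d\mu(w)+\int Q\,d\mu$ over compactly supported Borel measures of total mass $\tau$; $S_{Q,0}$ is the set of minimum points of $Q$. $Q$ is $\tau$-admissible ($\tau>0$) if $S_{Q,\tau}=S^\star_{Q,\tau}$, $Q$ is $C^2$, real-analytic and strictly subharmonic in a neighborhood of $S_{Q,\tau}$, $\liminf_{|z|\to\infty}Q(z)/\log|z|^2>\tau$, and $\partial S_{Q,\tau}$ is a smooth Jordan curve. $Q$ is $[0,1]$-admissible if it is $\tau$-admissible for all $\tau\in(0,1+\delta)$ for some $\delta>0$ and $S_{Q,0}$ is a single point. *)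

theory Defs
  imports "HOL-Analysis.Analysis"
begin

definition ereal_int :: "'a measure \<Rightarrow> ('a \<Rightarrow> ereal) \<Rightarrow> ereal" where
  "ereal_int M f =
     enn2ereal (\<integral>\<^sup>+ x. e2ennreal (f x) \<partial>M) - enn2ereal (\<integral>\<^sup>+ x. e2ennreal (- f x) \<partial>M)"

definition usc :: "(complex \<Rightarrow> ereal) \<Rightarrow> bool" where
  "usc q \<longleftrightarrow> (\<forall>c. open {z. q z < c})"

definition circle_mean :: "(complex \<Rightarrow> ereal) \<Rightarrow> complex \<Rightarrow> real \<Rightarrow> ereal" where
  "circle_mean q a r =
     ereal_int (restrict_space lborel {0..2*pi}) (\<lambda>t. q (a + complex_of_real r * cis t))
       / ereal (2 * pi)"

definition subharmonic :: "(complex \<Rightarrow> ereal) \<Rightarrow> bool" where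
  "subharmonic q \<longleftrightarrow> (\<forall>z. q z \<noteq> \<infinity>) \<and> usc q \<and>
     (\<forall>a r. 0 < r \<longrightarrow> q a \<le> circle_mean q a r)"

definition log_growth :: "(complex \<Rightarrow> ereal) \<Rightarrow> real \<Rightarrow> bool" where
  "log_growth q tau \<longleftrightarrow>
     (\<exists>C R. \<forall>w. R \<le> cmod w \<longrightarrow> q w \<le> ereal (tau * ln ((cmod w)\<^sup>2) + C))"

definition checkQ :: "(complex \<Rightarrow> real) \<Rightarrow> real \<Rightarrow> complex \<Rightarrow> ereal" where
  "checkQ Q tau z =
     (SUP q \<in> {q. subharmonic q \<and> (\<forall>w. q w \<le> ereal (Q w)) \<and> log_growth q tau}. q z)"

definition Sstar :: "(complex \<Rightarrow> real) \<Rightarrow> real \<Rightarrow> complex set" where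
  "Sstar Q tau = {z. checkQ Q tau z = ereal (Q z)}"

definition msupp :: "complex measure \<Rightarrow> complex set" where
  "msupp \<mu> = {z. \<forall>e>0. emeasure \<mu> (ball z e) > 0}"

definition admissible_measures :: "real \<Rightarrow> complex measure set" where
  "admissible_measures tau =
     {\<mu>. sets \<mu> = sets borel \<and> emeasure \<mu> UNIV = ennreal tau \<and> compact (msupp \<mu>)}"

definition log_kernel :: "complex \<Rightarrow> complex \<Rightarrow> ereal" where
  "log_kernel z w = (if z = w then \<infinity> else ereal (- ln (cmod (z - w))))"

definition log_energy :: "complex measure \<Rightarrow> ereal" where
  "log_energy \<mu> =
     enn2ereal (\<integral>\<^sup>+ z. \<integral>\<^sup>+ w. e2ennreal (log_kernel z w) \<partial>\<mu> \<partial>\<mu>)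
   - enn2ereal (\<integral>\<^sup>+ z. \<integral>\<^sup>+ w. e2ennreal (- log_kernel z w) \<partial>\<mu> \<partial>\<mu>)"

definition Jfun :: "(complex \<Rightarrow> real) \<Rightarrow> complex measure \<Rightarrow> ereal" where
  "Jfun Q \<mu> = log_energy \<mu> + ereal_int \<mu> (\<lambda>z. ereal (Q z))"

definition is_minimizer :: "(complex \<Rightarrow> real) \<Rightarrow> real \<Rightarrow> complex measure \<Rightarrow> bool" where
  "is_minimizer Q tau \<mu> \<longleftrightarrow> \<mu> \<in> admissible_measures tau \<and>
     (\<forall>\<nu>\<in>admissible_measures tau. Jfun Q \<mu> \<le> Jfun Q \<nu>)"

definition S_Q :: "(complex \<Rightarrow> real) \<Rightarrow> real \<Rightarrow> complex set" where
  "S_Q Q tau = (if tau = 0 then {z. \<forall>w. Q z \<le> Q w}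
                else msupp (THE \<mu>. is_minimizer Q tau \<mu>))"

definition pdir :: "complex \<Rightarrow> (complex \<Rightarrow> real) \<Rightarrow> complex \<Rightarrow> real" where
  "pdir v f z = deriv (\<lambda>t::real. f (z + complex_of_real t * v)) 0"

definition C2_on :: "(complex \<Rightarrow> real) \<Rightarrow> complex set \<Rightarrow> bool" where
  "C2_on f U \<longleftrightarrow> open U \<and> continuous_on U f \<and>
     (\<forall>v\<in>{1, \<i>}.
        (\<forall>z\<in>U. (\<lambda>t::real. f (z + complex_of_real t * v)) differentiable (at 0)) \<and>
        continuous_on U (pdir v f) \<and>
        (\<forall>w\<in>{1, \<i>}.
           (\<forall>z\<in>U. (\<lambda>t::real. pdir v f (z + complex_of_real t * w)) differentiable (at 0)) \<and>
           continuous_on U (pdir w (pdir v f))))"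

definition laplacian :: "(complex \<Rightarrow> real) \<Rightarrow> complex \<Rightarrow> real" where
  "laplacian f z = pdir 1 (pdir 1 f) z + pdir \<i> (pdir \<i> f) z"

definition real_analytic_on :: "(complex \<Rightarrow> real) \<Rightarrow> complex set \<Rightarrow> bool" where
  "real_analytic_on f U \<longleftrightarrow> (\<forall>p\<in>U. \<exists>r>0. \<exists>a :: nat \<Rightarrow> nat \<Rightarrow> real. \<forall>z\<in>ball p r.
      (\<lambda>(j,k). \<bar>a j k * (Re (z - p)) ^ j * (Im (z - p)) ^ k\<bar>) summable_on UNIV \<and>
      ((\<lambda>(j,k). a j k * (Re (z - p)) ^ j * (Im (z - p)) ^ k) has_sum f z) UNIV)"

definition smooth_jordan_curve :: "complex set \<Rightarrow> bool" where
  "smooth_jordan_curve C \<longleftrightarrow> (\<exists>\<gamma> :: real \<Rightarrow> complex.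
      (\<forall>t. \<gamma> (t + 1) = \<gamma> t) \<and>
      (\<forall>n t. (((\<lambda>g t. vector_derivative g (at t)) ^^ n) \<gamma>) differentiable (at t)) \<and>
      (\<forall>t. vector_derivative \<gamma> (at t) \<noteq> 0) \<and>
      inj_on \<gamma> {0..<1} \<and> C = \<gamma> ` {0..1})"

definition tau_admissible :: "(complex \<Rightarrow> real) \<Rightarrow> real \<Rightarrow> bool" where
  "tau_admissible Q tau \<longleftrightarrow> 0 < tau \<and>
     (\<exists>!\<mu>. is_minimizer Q tau \<mu>) \<and>
     S_Q Q tau = Sstar Q tau \<and>
     (\<exists>U. open U \<and> S_Q Q tau \<subseteq> U \<and> C2_on Q U \<and> real_analytic_on Q U \<and>
          (\<forall>z\<in>U. laplacian Q z > 0)) \<and>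
     Liminf at_infinity (\<lambda>z. ereal (Q z / ln ((cmod z)\<^sup>2))) > ereal tau \<and>
     smooth_jordan_curve (frontier (S_Q Q tau))"

definition unit_admissible :: "(complex \<Rightarrow> real) \<Rightarrow> bool" where
  "unit_admissible Q \<longleftrightarrow>
     (\<exists>\<delta>>0. \<forall>tau\<in>{0<..<1+\<delta>}. tau_admissible Q tau) \<and> (\<exists>z0. S_Q Q 0 = {z0})"

end

theory Submission
  imports Defs "HOL-Complex_Analysis.Complex_Analysis"
begin

lemma ereal_int_cont:
  fixes G :: "real \<Rightarrow> real"
  assumes cG: "continuous_on {0..2*pi} G"
  shows "ereal_int (restrict_space lborel {0..2*pi}) (\<lambda>t. ereal (G t)) = ereal (integral {0..2*pi} G)"
proof -
  have ip: "(\<lambda>x. max 0 (G x)) integrable_on {0..2*pi}"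
    by (intro integrable_continuous_interval continuous_intros cG)
  have im: "(\<lambda>x. max 0 (- G x)) integrable_on {0..2*pi}"
    by (intro integrable_continuous_interval continuous_intros cG)
  have e1: "(\<integral>\<^sup>+ x. e2ennreal (ereal (G x)) \<partial>restrict_space lborel {0..2*pi})
      = ennreal (integral {0..2*pi} (\<lambda>x. max 0 (G x)))"
  proof -
    have "(\<integral>\<^sup>+ x. e2ennreal (ereal (G x)) \<partial>restrict_space lborel {0..2*pi})
       = (\<integral>\<^sup>+ x. ennreal (max 0 (G x)) * indicator {0..2*pi} x \<partial>lborel)"
      by (subst nn_integral_restrict_space) (auto simp: ennreal_max_0 intro!: nn_integral_cong)
    also have "\<dots> = ennreal (integral {0..2*pi} (\<lambda>x. max 0 (G x)))"
      by (rule nn_integral_has_integral_lebesgue') (use ip in auto)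
    finally show ?thesis .
  qed
  have e2: "(\<integral>\<^sup>+ x. e2ennreal (- ereal (G x)) \<partial>restrict_space lborel {0..2*pi})
      = ennreal (integral {0..2*pi} (\<lambda>x. max 0 (- G x)))"
  proof -
    have "(\<integral>\<^sup>+ x. e2ennreal (- ereal (G x)) \<partial>restrict_space lborel {0..2*pi})
       = (\<integral>\<^sup>+ x. ennreal (max 0 (- G x)) * indicator {0..2*pi} x \<partial>lborel)"
      by (subst nn_integral_restrict_space) (auto simp: ennreal_max_0 intro!: nn_integral_cong)
    also have "\<dots> = ennreal (integral {0..2*pi} (\<lambda>x. max 0 (- G x)))"
      by (rule nn_integral_has_integral_lebesgue') (use im in auto)
    finally show ?thesis .
  qed
  have n1: "integral {0..2*pi} (\<lambda>x. max 0 (G x)) \<ge> 0"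
    by (rule integral_nonneg) (use ip in auto)
  have n2: "integral {0..2*pi} (\<lambda>x. max 0 (- G x)) \<ge> 0"
    by (rule integral_nonneg) (use im in auto)
  have "integral {0..2*pi} (\<lambda>x. max 0 (G x)) - integral {0..2*pi} (\<lambda>x. max 0 (- G x))
      = integral {0..2*pi} (\<lambda>x. max 0 (G x) - max 0 (- G x))"
    by (rule integral_diff[symmetric]) (use ip im in auto)
  also have "\<dots> = integral {0..2*pi} G"
    by (rule integral_cong) auto
  finally have "integral {0..2*pi} (\<lambda>x. max 0 (G x)) - integral {0..2*pi} (\<lambda>x. max 0 (- G x))
      = integral {0..2*pi} G" .
  then show ?thesis
    unfolding ereal_int_def e1 e2 using n1 n2 by simp
qed


lemma log_mean:
  fixes b :: complex and \<rho> :: real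
  assumes r0: "0 < \<rho>" and rb: "\<rho> < cmod b"
  shows "((\<lambda>t. ln (cmod (b + \<rho> * cis t))) has_integral (2*pi * ln (cmod b))) {0..2*pi}"
proof -
  have b0: "b \<noteq> 0" using r0 rb by auto
  define f where "f = (\<lambda>u. Ln (u / b))"
  have nn: "u / b \<notin> \<real>\<^sub>\<le>\<^sub>0" if "u \<in> ball b (cmod b)" for u
  proof -
    have "cmod (u/b - 1) = cmod (u - b) / cmod b"
    proof -
      have "u/b - 1 = (u - b)/b" using b0 by (simp add: field_simps)
      thus ?thesis by (simp add: norm_divide)
    qed
    also have "\<dots> < 1" using that b0 by (simp add: dist_norm norm_minus_commute)
    finally have "cmod (u/b - 1) < 1" .
    hence "Re (u/b) > 0"
      using abs_Re_le_cmod[of "u/b - 1"] by auto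
    thus ?thesis by (auto simp: complex_nonpos_Reals_iff)
  qed
  have hol: "f holomorphic_on ball b (cmod b)"
    unfolding f_def by (intro holomorphic_intros) (use nn b0 in auto)
  have "f holomorphic_on ball b \<rho>"
    using hol by (rule holomorphic_on_subset) (use rb in auto)
  moreover have "continuous_on (cball b \<rho>) f"
    using holomorphic_on_imp_continuous_on[OF hol] by (rule continuous_on_subset) (use rb in auto)
  ultimately have "((\<lambda>u. f u/(u-b)) has_contour_integral (2 * of_real pi * \<i> * f b)) (circlepath b \<rho>)"
    using Cauchy_integral_circlepath[of b \<rho> f b] r0 by auto
  moreover have "f b = 0" using b0 by (simp add: f_def)
  ultimately have "((\<lambda>u. f u/(u-b)) has_contour_integral 0) (part_circlepath b \<rho> 0 (2*pi))"
    by (simp add: circlepath_def)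
  hence "((\<lambda>t. f (b + \<rho> * cis t) / (b + \<rho> * cis t - b) * \<rho> * \<i> * cis t) has_integral 0) {0..2*pi}"
    by (subst (asm) has_contour_integral_part_circlepath_iff) auto
  moreover have "(\<lambda>t. f (b + \<rho> * cis t) / (b + \<rho> * cis t - b) * \<rho> * \<i> * cis t) = (\<lambda>t. \<i> * f (b + \<rho> * cis t))"
  proof (rule ext)
    fix t
    have "w / (complex_of_real \<rho> * cis t) * \<rho> * \<i> * cis t = \<i> * w" for w
      using r0 by (simp add: field_simps)
    thus "f (b + \<rho> * cis t) / (b + \<rho> * cis t - b) * \<rho> * \<i> * cis t = \<i> * f (b + \<rho> * cis t)"
      by simp
  qed
  ultimately have "((\<lambda>t. \<i> * f (b + \<rho> * cis t)) has_integral 0) {0..2*pi}" by (simp only:)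
  hence "((\<lambda>t. f (b + \<rho> * cis t)) has_integral 0) {0..2*pi}"
    by (subst (asm) has_integral_mult_right_iff) auto
  hence "((Re \<circ> (\<lambda>t. f (b + \<rho> * cis t))) has_integral Re 0) {0..2*pi}"
    by (rule has_integral_linear) (rule bounded_linear_Re)
  moreover have "(Re \<circ> (\<lambda>t. f (b + \<rho> * cis t))) = (\<lambda>t. ln (cmod (b + \<rho> * cis t)) - ln (cmod b))"
  proof (rule ext)
    fix t
    have "b + \<rho> * cis t \<noteq> 0"
    proof
      assume "b + \<rho> * cis t = 0"
      hence "cmod b = cmod (\<rho> * cis t)" by (metis add_eq_0_iff norm_minus_cancel)
      thus False using rb r0 by (simp add: norm_mult)
    qed
    thus "(Re \<circ> (\<lambda>t. f (b + \<rho> * cis t))) t = ln (cmod (b + \<rho> * cis t)) - ln (cmod b)"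
      using b0 by (simp add: f_def norm_divide ln_div)
  qed
  ultimately have "((\<lambda>t. ln (cmod (b + \<rho> * cis t)) - ln (cmod b)) has_integral 0) {0..2*pi}"
    by (simp only: zero_complex.sel)
  moreover have "((\<lambda>t. ln (cmod b)) has_integral (2*pi*ln (cmod b))) {0..2*pi}"
    using has_integral_const_real[of "ln (cmod b)" 0 "2*pi"] by simp
  ultimately have "((\<lambda>t. (ln (cmod (b + complex_of_real \<rho> * cis t)) - ln (cmod b)) + ln (cmod b)) has_integral (0 + 2*pi*ln (cmod b))) {0..2*pi}"
    by (rule has_integral_add)
  thus ?thesis by simp
qed

lemma sq_mean:
  fixes b :: complex and \<rho> :: real
  shows "((\<lambda>t. (cmod (b + \<rho> * cis t))\<^sup>2) has_integral (2*pi * ((cmod b)\<^sup>2 + \<rho>\<^sup>2))) {0..2*pi}"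
proof -
  define F where "F = (\<lambda>t. ((cmod b)\<^sup>2 + \<rho>\<^sup>2) * t + 2 * \<rho> * (Re b * sin t - Im b * cos t))"
  have eq: "(cmod (b + \<rho> * cis t))\<^sup>2 = ((cmod b)\<^sup>2 + \<rho>\<^sup>2) + 2 * \<rho> * (Re b * cos t + Im b * sin t)" for t
  proof -
    have "(cmod (b + \<rho> * cis t))\<^sup>2 = (Re b + \<rho> * cos t)\<^sup>2 + (Im b + \<rho> * sin t)\<^sup>2"
      by (simp add: cmod_power2)
    also have "\<dots> = (((Re b)\<^sup>2 + (Im b)\<^sup>2) + (\<rho>\<^sup>2 * (sin t)\<^sup>2 + \<rho>\<^sup>2 * (cos t)\<^sup>2)) + 2 * \<rho> * (Re b * cos t + Im b * sin t)"
    proof -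
      have h1: "(Re b + \<rho> * cos t)\<^sup>2 = (Re b)\<^sup>2 + \<rho>\<^sup>2 * (cos t)\<^sup>2 + 2 * \<rho> * (Re b * cos t)"
        unfolding power2_eq_square by (simp add: algebra_simps)
      have h2: "(Im b + \<rho> * sin t)\<^sup>2 = (Im b)\<^sup>2 + \<rho>\<^sup>2 * (sin t)\<^sup>2 + 2 * \<rho> * (Im b * sin t)"
        unfolding power2_eq_square by (simp add: algebra_simps)
      show ?thesis unfolding h1 h2 by (simp only: algebra_simps)
    qed
    also have "\<rho>\<^sup>2 * (sin t)\<^sup>2 + \<rho>\<^sup>2 * (cos t)\<^sup>2 = \<rho>\<^sup>2"
      by (metis distrib_left sin_cos_squared_add mult_1_right)
    finally show ?thesis by (simp only: cmod_power2)
  qed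
  have "((\<lambda>t. ((cmod b)\<^sup>2 + \<rho>\<^sup>2) + 2 * \<rho> * (Re b * cos t + Im b * sin t)) has_integral (F (2*pi) - F 0)) {0..2*pi}"
  proof (rule fundamental_theorem_of_calculus)
    show "0 \<le> 2*pi" by simp
    fix x assume "x \<in> {0..2*pi}"
    show "(F has_vector_derivative ((cmod b)\<^sup>2 + \<rho>\<^sup>2 + 2 * \<rho> * (Re b * cos x + Im b * sin x))) (at x within {0..2*pi})"
      unfolding F_def has_real_derivative_iff_has_vector_derivative[symmetric]
      by (auto intro!: derivative_eq_intros simp: algebra_simps)
  qed
  moreover have "F (2*pi) - F 0 = 2*pi * ((cmod b)\<^sup>2 + \<rho>\<^sup>2)" by (simp add: F_def)
  moreover have "(\<lambda>t. (cmod (b + \<rho> * cis t))\<^sup>2) = (\<lambda>t. ((cmod b)\<^sup>2 + \<rho>\<^sup>2) + 2 * \<rho> * (Re b * cos t + Im b * sin t))"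
    using eq by (rule ext)
  ultimately show ?thesis by (simp only:)
qed


lemma ereal_int_mono:
  assumes "\<And>t. f t \<le> g t"
  shows "ereal_int M f \<le> ereal_int M g"
proof -
  have "(\<integral>\<^sup>+ x. e2ennreal (f x) \<partial>M) \<le> (\<integral>\<^sup>+ x. e2ennreal (g x) \<partial>M)"
    by (intro nn_integral_mono e2ennreal_mono assms)
  moreover have "(\<integral>\<^sup>+ x. e2ennreal (- g x) \<partial>M) \<le> (\<integral>\<^sup>+ x. e2ennreal (- f x) \<partial>M)"
    by (intro nn_integral_mono e2ennreal_mono) (simp add: assms)
  ultimately show ?thesis
    unfolding ereal_int_def
    by (intro ereal_minus_mono) (simp_all add: less_eq_ennreal.rep_eq[symmetric])
qed

lemma circle_mean_le:
  fixes G :: "real \<Rightarrow> real"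
  assumes cG: "continuous_on {0..2*pi} G" and le: "\<And>t. q (a + complex_of_real r * cis t) \<le> ereal (G t)"
  shows "circle_mean q a r \<le> ereal (integral {0..2*pi} G / (2*pi))"
proof -
  have "ereal_int (restrict_space lborel {0..2*pi}) (\<lambda>t. q (a + complex_of_real r * cis t))
      \<le> ereal_int (restrict_space lborel {0..2*pi}) (\<lambda>t. ereal (G t))"
    by (rule ereal_int_mono) (rule le)
  also have "\<dots> = ereal (integral {0..2*pi} G)" by (rule ereal_int_cont[OF cG])
  finally have "circle_mean q a r \<le> ereal (integral {0..2*pi} G) / ereal (2*pi)"
    unfolding circle_mean_def by (rule ereal_divide_right_mono) simp
  thus ?thesis by simp
qed

lemma circle_mean_const: "circle_mean (\<lambda>_. ereal c) a r = ereal c"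
proof -
  have "ereal_int (restrict_space lborel {0..2*pi}) (\<lambda>t. ereal c) = ereal (integral {0..2*pi} (\<lambda>t. c))"
    by (rule ereal_int_cont) simp
  thus ?thesis unfolding circle_mean_def by simp
qed

lemma subharmonic_const: "subharmonic (\<lambda>_. ereal c)"
  unfolding subharmonic_def usc_def
proof (intro conjI allI impI)
  fix c' :: ereal
  show "open {z::complex. ereal c < c'}"
    by (cases "ereal c < c'") auto
qed (auto simp: circle_mean_const)

lemma ereal_add_real_less: "x < ereal m \<Longrightarrow> x + ereal p < ereal (m + p)"
  by (cases x) auto

lemma ereal_add_real_le_iff: "x + ereal p \<le> ereal m \<longleftrightarrow> x \<le> ereal (m - p)"
  by (cases x) auto

lemma usc_attains_max:
  fixes v :: "complex \<Rightarrow> ereal" and q :: "complex \<Rightarrow> ereal" and \<psi> :: "complex \<Rightarrow> real"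
  assumes uq: "usc q" and cA: "compact A" and ne: "A \<noteq> {}" and c\<psi>: "continuous_on A \<psi>"
    and v: "\<And>w. v w = q w + ereal (\<psi> w)"
  shows "\<exists>a\<in>A. \<forall>w\<in>A. v w \<le> v a"
proof (rule ccontr)
  assume nm: "\<not> (\<exists>a\<in>A. \<forall>w\<in>A. v w \<le> v a)"
  define S where "S = (SUP w\<in>A. v w)"
  have lt: "v a < S" if "a \<in> A" for a
  proof -
    from nm that obtain w where "w \<in> A" "v a < v w" by (auto simp: not_le)
    moreover have "v w \<le> S" unfolding S_def using \<open>w \<in> A\<close> by (rule SUP_upper)
    ultimately show ?thesis by simp
  qed
  have loc: "\<exists>c. c < S \<and> (\<exists>N. open N \<and> a \<in> N \<and> (\<forall>y\<in>A \<inter> N. v y < c))" if a: "a \<in> A" for a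
  proof -
    obtain c where c1: "v a < ereal c" and c2: "ereal c < S" using ereal_dense2[OF lt[OF a]] by blast
    have "q a < ereal (c - \<psi> a)"
      using c1 v[of a] by (cases "q a") auto
    then obtain m where m1: "q a < ereal m" and m2': "ereal m < ereal (c - \<psi> a)"
      using ereal_dense2 by blast
    from m2' have m2: "m < c - \<psi> a" by simp
    define e where "e = (c - \<psi> a - m) / 2"
    have e: "e > 0" using m2 by (simp add: e_def)
    obtain \<eta> where \<eta>: "\<eta> > 0" "\<forall>y\<in>A. dist y a < \<eta> \<longrightarrow> dist (\<psi> y) (\<psi> a) < e"
      using c\<psi> a e unfolding continuous_on_iff by blast
    define N where "N = {w. q w < ereal m} \<inter> ball a \<eta>"
    have "open N" using uq unfolding N_def usc_def by auto
    moreover have "a \<in> N" using m1 \<eta> by (simp add: N_def)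
    moreover have "v y < ereal c" if y: "y \<in> A \<inter> N" for y
    proof -
      have "dist (\<psi> y) (\<psi> a) < e" using \<eta> y by (auto simp: N_def dist_commute)
      hence "\<psi> y < \<psi> a + e" by (auto simp: dist_real_def)
      have "q y < ereal m" using y by (simp add: N_def)
      hence "q y + ereal (\<psi> y) < ereal (m + \<psi> y)" by (rule ereal_add_real_less)
      also have "m + \<psi> y \<le> c" using \<open>\<psi> y < \<psi> a + e\<close> m2 unfolding e_def by (simp add: field_simps)
      finally show ?thesis using v[of y] by simp
    qed
    ultimately show ?thesis using c2 by blast
  qed
  have "\<forall>a\<in>A. \<exists>c. c < S \<and> (\<exists>N. open N \<and> a \<in> N \<and> (\<forall>y\<in>A \<inter> N. v y < c))"
    using loc by blast
  hence "\<exists>c. \<forall>a\<in>A. c a < S \<and> (\<exists>N. open N \<and> a \<in> N \<and> (\<forall>y\<in>A \<inter> N. v y < c a))"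
    by (rule bchoice)
  then obtain c where c: "\<forall>a\<in>A. c a < S \<and> (\<exists>N. open N \<and> a \<in> N \<and> (\<forall>y\<in>A \<inter> N. v y < c a))"
    by blast
  have "\<forall>a\<in>A. \<exists>N. open N \<and> a \<in> N \<and> (\<forall>y\<in>A \<inter> N. v y < c a)"
    using c by blast
  hence "\<exists>N. \<forall>a\<in>A. open (N a) \<and> a \<in> N a \<and> (\<forall>y\<in>A \<inter> N a. v y < c a)"
    by (rule bchoice)
  then obtain N where N: "\<forall>a\<in>A. open (N a) \<and> a \<in> N a \<and> (\<forall>y\<in>A \<inter> N a. v y < c a)"
    by blast
  obtain T where T: "T \<subseteq> A" "finite T" "A \<subseteq> (\<Union>a\<in>T. N a)"
    using compactE_image[OF cA, of A N] N by blast
  have Tne: "T \<noteq> {}" using T ne by auto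
  define cm where "cm = Max (c ` T)"
  have "cm \<in> c ` T" unfolding cm_def using T Tne by (intro Max_in) auto
  hence cmS: "cm < S" using c T by auto
  have "v y \<le> cm" if "y \<in> A" for y
  proof -
    from T that obtain a where a: "a \<in> T" "y \<in> N a" by auto
    hence "v y < c a" using N T that by blast
    also have "c a \<le> cm" unfolding cm_def using T a by (intro Max_ge) auto
    finally show ?thesis by simp
  qed
  hence "S \<le> cm" unfolding S_def by (rule SUP_least)
  with cmS show False by simp
qed

lemma core:
  fixes q :: "complex \<Rightarrow> ereal" and z0 z :: complex and r R \<delta> \<kappa> B :: real
  assumes sh: "subharmonic q" and r: "0 < r" "r < R"
    and zA: "r \<le> cmod (z - z0)" "cmod (z - z0) \<le> R" and \<delta>: "0 < \<delta>"
    and bd: "\<And>w. cmod (w - z0) = r \<or> cmod (w - z0) = R \<Longrightarrow>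
              q w + ereal (\<delta> * (cmod (w - z0))\<^sup>2 - \<kappa> * ln (cmod (w - z0))) \<le> ereal B"
  shows "q z + ereal (\<delta> * (cmod (z - z0))\<^sup>2 - \<kappa> * ln (cmod (z - z0))) \<le> ereal B"
proof -
  define \<psi> where "\<psi> = (\<lambda>w. \<delta> * (cmod (w - z0))\<^sup>2 - \<kappa> * ln (cmod (w - z0)))"
  define v where "v = (\<lambda>w. q w + ereal (\<psi> w))"
  define A where "A = cball z0 R - ball z0 r"
  have Aeq: "w \<in> A \<longleftrightarrow> r \<le> cmod (w - z0) \<and> cmod (w - z0) \<le> R" for w
    by (auto simp: A_def dist_norm norm_minus_commute)
  have cA: "compact A" unfolding A_def by (intro compact_diff compact_cball open_ball)
  have zin: "z \<in> A" using zA Aeq by simp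
  have c\<psi>: "continuous_on A \<psi>"
    unfolding \<psi>_def by (intro continuous_intros) (use r in \<open>auto simp: Aeq\<close>)
  have uq: "usc q" using sh by (simp add: subharmonic_def)
  obtain a where a: "a \<in> A" "\<forall>w\<in>A. v w \<le> v a"
    using usc_attains_max[OF uq cA _ c\<psi>, of v] zin by (auto simp: v_def)
  have "v a \<le> ereal B"
  proof (cases "cmod (a - z0) = r \<or> cmod (a - z0) = R")
    case True
    thus ?thesis using bd[of a] by (simp add: v_def \<psi>_def)
  next
    case False
    hence ai: "r < cmod (a - z0)" "cmod (a - z0) < R" using a Aeq by force+
    show ?thesis
    proof (cases "v a = -\<infinity>")
      case True
      thus ?thesis by simp
    next
      case False
      have qa_ninf: "q a \<noteq> -\<infinity>" using False by (auto simp: v_def)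
      have "q a \<noteq> \<infinity>" using sh by (auto simp: subharmonic_def)
      then obtain qa where qa: "q a = ereal qa" using qa_ninf by (cases "q a") auto
      define b where "b = a - z0"
      define \<rho> where "\<rho> = min (cmod b - r) (R - cmod b) / 2"
      have \<rho>: "0 < \<rho>" "\<rho> < cmod b" "\<rho> \<le> (cmod b - r) / 2" "\<rho> \<le> (R - cmod b) / 2"
        using ai r by (auto simp: \<rho>_def b_def)
      define mval where "mval = qa + \<psi> a"
      have mvaleq: "v a = ereal mval" by (simp add: v_def qa mval_def)
      define G where "G = (\<lambda>t. mval - (\<delta> * (cmod (b + \<rho> * cis t))\<^sup>2 - \<kappa> * ln (cmod (b + \<rho> * cis t))))"
      have pt: "a + complex_of_real \<rho> * cis t - z0 = b + complex_of_real \<rho> * cis t" for t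
        by (simp add: b_def)
      have close: "\<bar>cmod (b + complex_of_real \<rho> * cis t) - cmod b\<bar> \<le> \<rho>" for t
      proof -
        have "\<bar>cmod (b + complex_of_real \<rho> * cis t) - cmod b\<bar> \<le> cmod ((b + complex_of_real \<rho> * cis t) - b)"
          by (rule norm_triangle_ineq3)
        also have "\<dots> = \<rho>" using \<rho> by (simp add: norm_mult)
        finally show ?thesis .
      qed
      have inA: "a + complex_of_real \<rho> * cis t \<in> A" for t
        using close[of t] \<rho> unfolding Aeq pt by (auto simp: abs_le_iff)
      have nz: "cmod (b + complex_of_real \<rho> * cis t) > 0" for t
        using close[of t] \<rho> by (auto simp: abs_le_iff)
      have le: "q (a + complex_of_real \<rho> * cis t) \<le> ereal (G t)" for t
      proof -
        have "v (a + complex_of_real \<rho> * cis t) \<le> ereal mval" using a inA[of t] mvaleq by metis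
        hence "q (a + complex_of_real \<rho> * cis t) + ereal (\<psi> (a + complex_of_real \<rho> * cis t)) \<le> ereal mval"
          by (simp add: v_def)
        hence "q (a + complex_of_real \<rho> * cis t) \<le> ereal (mval - \<psi> (a + complex_of_real \<rho> * cis t))"
          by (simp add: ereal_add_real_le_iff)
        thus ?thesis by (simp add: G_def \<psi>_def pt)
      qed
      have cG: "continuous_on {0..2*pi} G"
        unfolding G_def by (intro continuous_intros) (use nz in \<open>auto simp: less_le\<close>)
      have h1: "((\<lambda>t. mval) has_integral (2*pi*mval)) {0..2*pi}"
        using has_integral_const_real[of mval 0 "2*pi"] by simp
      have h2: "((\<lambda>t. \<delta> * (cmod (b + complex_of_real \<rho> * cis t))\<^sup>2) has_integral (\<delta> * (2*pi * ((cmod b)\<^sup>2 + \<rho>\<^sup>2)))) {0..2*pi}"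
        by (rule has_integral_mult_right) (rule sq_mean)
      have h3: "((\<lambda>t. \<kappa> * ln (cmod (b + complex_of_real \<rho> * cis t))) has_integral (\<kappa> * (2*pi * ln (cmod b)))) {0..2*pi}"
        by (rule has_integral_mult_right) (rule log_mean[OF \<rho>(1,2)])
      have "(G has_integral (2*pi*mval - (\<delta> * (2*pi * ((cmod b)\<^sup>2 + \<rho>\<^sup>2)) - \<kappa> * (2*pi * ln (cmod b))))) {0..2*pi}"
        unfolding G_def by (intro has_integral_diff h1 h2 h3)
      hence "integral {0..2*pi} G = 2*pi*mval - (\<delta> * (2*pi * ((cmod b)\<^sup>2 + \<rho>\<^sup>2)) - \<kappa> * (2*pi * ln (cmod b)))"
        by (rule integral_unique)
      also have "\<dots> = 2*pi * (qa - \<delta> * \<rho>\<^sup>2)"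
        by (simp add: mval_def \<psi>_def b_def algebra_simps)
      finally have intG: "integral {0..2*pi} G / (2*pi) = qa - \<delta> * \<rho>\<^sup>2" by simp
      have cm1: "circle_mean q a \<rho> \<le> ereal (qa - \<delta> * \<rho>\<^sup>2)"
        using circle_mean_le[OF cG le] intG by simp
      have cm2: "q a \<le> circle_mean q a \<rho>" using sh \<rho> by (auto simp: subharmonic_def)
      have "ereal qa \<le> ereal (qa - \<delta> * \<rho>\<^sup>2)" using order_trans[OF cm2 cm1] qa by simp
      moreover have "\<delta> * \<rho>\<^sup>2 > 0" using \<delta> \<rho> by simp
      ultimately show ?thesis by simp
    qed
  qed
  moreover have "v z \<le> v a" using a zin by blast
  ultimately show ?thesis by (simp add: v_def \<psi>_def)
qed

lemma key:
  fixes q :: "complex \<Rightarrow> ereal" and z0 z :: complex and r M tau :: real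
  assumes sh: "subharmonic q" and inner: "\<And>w. cmod (w - z0) \<le> r \<Longrightarrow> q w \<le> ereal M"
    and lg: "log_growth q tau" and tau: "0 < tau" and r: "0 < r" and zr: "r < cmod (z - z0)"
  shows "q z \<le> ereal (M + 4 * tau * (ln (cmod (z - z0)) - ln r))"
proof -
  obtain C R0 where CR: "\<And>w. R0 \<le> cmod w \<Longrightarrow> q w \<le> ereal (tau * ln ((cmod w)\<^sup>2) + C)"
    using lg unfolding log_growth_def by blast
  define \<kappa> where "\<kappa> = 4 * tau"
  define K where "K = (2 * tau * ln 2 + C - M + \<kappa> * ln r) / (2 * tau)"
  define R where "R = max (cmod (z - z0) + 1) (max (2 * cmod z0 + \<bar>R0\<bar> + 1) (exp K))"
  have R1: "cmod (z - z0) < R" "2 * cmod z0 + \<bar>R0\<bar> + 1 \<le> R" "exp K \<le> R"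
    unfolding R_def by auto
  have rR: "r < R" using zr R1 by linarith
  have Rpos: "0 < R" using rR r by linarith
  have lnR: "K \<le> ln R" using R1(3) Rpos by (metis exp_le_cancel_iff exp_ln)
  have outer: "q w + ereal (\<delta> * (cmod (w - z0))\<^sup>2 - \<kappa> * ln (cmod (w - z0))) \<le> ereal (M + \<delta> * R\<^sup>2 - \<kappa> * ln r)"
    if w: "cmod (w - z0) = R" for w :: complex and \<delta> :: real
  proof -
    have wlo: "R - cmod z0 \<le> cmod w" using w norm_triangle_ineq4[of w z0] by linarith
    have "cmod w \<le> cmod (w - z0) + cmod z0" using norm_triangle_ineq[of "w - z0" z0] by simp
    hence whi: "cmod w \<le> 2 * R" using w R1 abs_ge_zero[of R0] norm_ge_zero[of z0] by linarith
    have wR0: "R0 \<le> cmod w" using wlo R1 abs_ge_zero[of R0] abs_ge_self[of R0] norm_ge_zero[of z0] by linarith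
    have wpos: "0 < cmod w" using wlo R1 abs_ge_zero[of R0] norm_ge_zero[of z0] by linarith
    have "ln ((cmod w)\<^sup>2) = 2 * ln (cmod w)" by (simp add: ln_realpow)
    also have "ln (cmod w) \<le> ln (2 * R)" using whi wpos Rpos by (subst ln_le_cancel_iff) auto
    also have "ln (2 * R) = ln 2 + ln R" using Rpos by (simp add: ln_mult)
    finally have lw: "ln ((cmod w)\<^sup>2) \<le> 2 * (ln 2 + ln R)" by simp
    have "q w \<le> ereal (tau * ln ((cmod w)\<^sup>2) + C)" by (rule CR[OF wR0])
    also have "tau * ln ((cmod w)\<^sup>2) + C \<le> tau * (2 * (ln 2 + ln R)) + C"
      using lw tau by simp
    finally have qw: "q w \<le> ereal (tau * (2 * (ln 2 + ln R)) + C)" by simp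
    have "2 * tau * K \<le> 2 * tau * ln R" using lnR tau by simp
    hence Keq: "2 * tau * ln 2 + C - M + \<kappa> * ln r \<le> 2 * tau * ln R"
      unfolding K_def using tau by simp
    have "q w + ereal (\<delta> * (cmod (w - z0))\<^sup>2 - \<kappa> * ln (cmod (w - z0)))
        \<le> ereal (tau * (2 * (ln 2 + ln R)) + C) + ereal (\<delta> * R\<^sup>2 - \<kappa> * ln R)"
      using add_right_mono[OF qw, of "ereal (\<delta> * R\<^sup>2 - \<kappa> * ln R)"] w by simp
    also have "\<dots> \<le> ereal (M + \<delta> * R\<^sup>2 - \<kappa> * ln r)"
      using Keq unfolding \<kappa>_def by (simp add: algebra_simps)
    finally show ?thesis .
  qed
  have main: "q z \<le> ereal (M + \<kappa> * (ln (cmod (z - z0)) - ln r)) + ereal e" if e: "0 < e" for e :: real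
  proof -
    define \<delta> where "\<delta> = e / R\<^sup>2"
    have \<delta>: "0 < \<delta>" using e Rpos by (simp add: \<delta>_def)
    have "q z + ereal (\<delta> * (cmod (z - z0))\<^sup>2 - \<kappa> * ln (cmod (z - z0))) \<le> ereal (M + \<delta> * R\<^sup>2 - \<kappa> * ln r)"
    proof (rule core[OF sh r rR _ _ \<delta>])
      show "r \<le> cmod (z - z0)" "cmod (z - z0) \<le> R" using zr R1 by auto
      fix w assume "cmod (w - z0) = r \<or> cmod (w - z0) = R"
      then show "q w + ereal (\<delta> * (cmod (w - z0))\<^sup>2 - \<kappa> * ln (cmod (w - z0))) \<le> ereal (M + \<delta> * R\<^sup>2 - \<kappa> * ln r)"
      proof
        assume wr: "cmod (w - z0) = r"
        have "q w + ereal (\<delta> * (cmod (w - z0))\<^sup>2 - \<kappa> * ln (cmod (w - z0))) \<le> ereal M + ereal (\<delta> * r\<^sup>2 - \<kappa> * ln r)"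
          using add_right_mono[OF inner[of w], of "ereal (\<delta> * r\<^sup>2 - \<kappa> * ln r)"] wr by simp
        also have "\<dots> \<le> ereal (M + \<delta> * R\<^sup>2 - \<kappa> * ln r)"
          using rR r \<delta> by (simp add: power_strict_mono less_imp_le)
        finally show ?thesis .
      next
        assume "cmod (w - z0) = R"
        thus ?thesis by (rule outer)
      qed
    qed
    hence "q z \<le> ereal (M + \<delta> * R\<^sup>2 - \<kappa> * ln r - (\<delta> * (cmod (z - z0))\<^sup>2 - \<kappa> * ln (cmod (z - z0))))"
      by (simp add: ereal_add_real_le_iff)
    also have "\<dots> \<le> ereal (M + \<kappa> * (ln (cmod (z - z0)) - ln r) + e)"
      using \<delta> Rpos e by (simp add: \<delta>_def algebra_simps)
    finally show ?thesis by simp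
  qed
  have "q z \<le> ereal (M + \<kappa> * (ln (cmod (z - z0)) - ln r))"
    by (rule ereal_le_epsilon2) (rule main)
  thus ?thesis by (simp add: \<kappa>_def)
qed

lemma checkQ_lower:
  assumes min: "\<And>w. Q z0 \<le> Q w" and tau: "0 \<le> tau"
  shows "ereal (Q z0) \<le> checkQ Q tau z"
proof -
  have lgc: "log_growth (\<lambda>_. ereal (Q z0)) tau"
    unfolding log_growth_def
  proof (intro exI allI impI)
    fix w :: complex assume w: "1 \<le> cmod w"
    have "1 \<le> (cmod w)\<^sup>2" using w by (simp add: one_le_power)
    hence "0 \<le> ln ((cmod w)\<^sup>2)" by simp
    hence "0 \<le> tau * ln ((cmod w)\<^sup>2)" using tau by simp
    thus "ereal (Q z0) \<le> ereal (tau * ln ((cmod w)\<^sup>2) + Q z0)" by simp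
  qed
  have "(\<lambda>_. ereal (Q z0)) \<in> {q. subharmonic q \<and> (\<forall>w. q w \<le> ereal (Q w)) \<and> log_growth q tau}"
    using subharmonic_const lgc min by auto
  thus ?thesis unfolding checkQ_def by (rule SUP_upper2) simp
qed

lemma checkQ_upper: "checkQ Q tau z \<le> ereal (Q z)"
  unfolding checkQ_def by (rule SUP_least) auto

theorem lemma1:
  fixes Q :: "complex \<Rightarrow> real"
  assumes "unit_admissible Q"
  shows "\<forall>z. ((\<lambda>tau. checkQ Q tau z) \<longlongrightarrow> (INF w. ereal (Q w))) (at_right 0)"
proof
  fix z
  obtain \<delta>0 z0 where \<delta>0: "\<delta>0 > 0" "\<forall>tau\<in>{0<..<1+\<delta>0}. tau_admissible Q tau"
    and z0: "S_Q Q 0 = {z0}"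
    using assms unfolding unit_admissible_def by blast
  have min: "\<And>w. Q z0 \<le> Q w"
    using z0 unfolding S_Q_def by (auto simp: set_eq_iff)
  have INFeq: "(INF w. ereal (Q w)) = ereal (Q z0)"
    by (rule antisym) (auto intro: INF_lower INF_greatest simp: min)
  have adm: "tau_admissible Q (1/2)" using \<delta>0 by auto
  then obtain U where U: "open U" "S_Q Q (1/2) \<subseteq> U" "C2_on Q U"
    and SS: "S_Q Q (1/2) = Sstar Q (1/2)"
    unfolding tau_admissible_def by blast
  have "checkQ Q (1/2) z0 = ereal (Q z0)"
    using checkQ_lower[of Q z0, OF min, of "1/2" z0] checkQ_upper[of Q "1/2" z0] by simp
  hence "z0 \<in> U" using U SS unfolding Sstar_def by auto
  moreover have "continuous_on U Q" using U(3) unfolding C2_on_def by blast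
  ultimately have cz0: "isCont Q z0" using U(1) by (simp add: continuous_on_eq_continuous_at)
  show "((\<lambda>tau. checkQ Q tau z) \<longlongrightarrow> (INF w. ereal (Q w))) (at_right 0)"
    unfolding INFeq
  proof (rule order_tendstoI)
    fix a assume a: "a < ereal (Q z0)"
    have "eventually (\<lambda>tau. 0 < tau) (at_right (0::real))"
      by (simp add: eventually_at_right_field) (auto intro: exI[of _ 1])
    thus "eventually (\<lambda>tau. a < checkQ Q tau z) (at_right 0)"
      by eventually_elim (use a checkQ_lower[of Q z0, OF min] in \<open>auto intro: less_le_trans\<close>)
  next
    fix b assume b: "ereal (Q z0) < b"
    show "eventually (\<lambda>tau. checkQ Q tau z < b) (at_right 0)"
    proof (cases b)
      case PInf
      have "checkQ Q tau z < \<infinity>" for tau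
        using le_less_trans[OF checkQ_upper[of Q tau z], of \<infinity>] by simp
      thus ?thesis using PInf by (intro always_eventually allI) simp
    next
      case MInf
      thus ?thesis using b by simp
    next
      case (real b')
      hence bb: "Q z0 < b'" using b by simp
      define \<epsilon> where "\<epsilon> = b' - Q z0"
      have \<epsilon>: "\<epsilon> > 0" using bb by (simp add: \<epsilon>_def)
      obtain r' where r': "r' > 0" "\<forall>w. dist w z0 < r' \<longrightarrow> dist (Q w) (Q z0) < \<epsilon>/2"
        using cz0 \<epsilon> unfolding continuous_at_eps_delta by (metis half_gt_zero)
      define r where "r = r'/2"
      have r: "0 < r" using r' by (simp add: r_def)
      define M where "M = Q z0 + \<epsilon>/2"
      have inner: "Q w \<le> M" if "cmod (w - z0) \<le> r" for w
      proof -
        have "dist w z0 < r'" using that r' by (simp add: dist_norm r_def)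
        hence "dist (Q w) (Q z0) < \<epsilon>/2" using r' by blast
        hence "\<bar>Q w - Q z0\<bar> < \<epsilon>/2" by (simp add: dist_real_def)
        hence "Q w - Q z0 < \<epsilon>/2" by linarith
        thus ?thesis unfolding M_def by linarith
      qed
      show ?thesis
      proof (cases "cmod (z - z0) \<le> r")
        case True
        have "M < b'" unfolding M_def \<epsilon>_def using bb by (simp add: field_simps)
        hence "Q z < b'" using inner[OF True] by linarith
        have "checkQ Q tau z < b" for tau
          using le_less_trans[OF checkQ_upper[of Q tau z], of b] real \<open>Q z < b'\<close> by simp
        thus ?thesis by (intro always_eventually allI)
      next
        case False
        hence zr: "r < cmod (z - z0)" by simp
        define L where "L = ln (cmod (z - z0)) - ln r"
        have "ln r < ln (cmod (z - z0))" using zr r by (subst ln_less_cancel_iff) auto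
        hence L: "L > 0" by (simp add: L_def)
        define t0 where "t0 = \<epsilon> / (8 * L + 8)"
        have t0: "t0 > 0" using \<epsilon> L by (simp add: t0_def)
        have "eventually (\<lambda>tau. 0 < tau \<and> tau < t0) (at_right (0::real))"
          unfolding eventually_at_right_field using t0 by auto
        thus ?thesis
        proof eventually_elim
          case (elim tau)
          hence tau: "0 < tau" "tau < t0" by auto
          have "checkQ Q tau z \<le> ereal (M + 4 * tau * L)"
            unfolding checkQ_def
          proof (rule SUP_least)
            fix q assume q: "q \<in> {q. subharmonic q \<and> (\<forall>w. q w \<le> ereal (Q w)) \<and> log_growth q tau}"
            show "q z \<le> ereal (M + 4 * tau * L)"
              unfolding L_def
            proof (rule key[OF _ _ _ tau(1) r zr])
              show "subharmonic q" "log_growth q tau" using q by auto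
              fix w assume "cmod (w - z0) \<le> r"
              thus "q w \<le> ereal M" using q inner[of w] by (auto intro: order_trans)
            qed
          qed
          also have "M + 4 * tau * L < b'"
          proof -
            have "4 * tau * L < 4 * t0 * L" using tau L by simp
            also have "4 * t0 * L = \<epsilon> * (4 * L) / (8 * L + 8)" by (simp add: t0_def)
            also have "\<dots> < \<epsilon> / 2" using \<epsilon> L by (simp add: field_simps)
            finally show ?thesis by (simp add: M_def \<epsilon>_def field_simps)
          qed
          hence "ereal (M + 4 * tau * L) < b" using real by simp
          finally show ?case .
        qed
      qed
    qed
  qed
qed

end
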